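(* Let $(B_1;R_1),(B_2;R_2)\in\mathcal C$, let $A_0=B_1\cap B_2$, and suppose $R_1|A_0=R_2|A_0$ and $A_0\le(B_i;R_i)$ for $i=1,2$. Let $C=B_1\cup B_2$ with $R=R_1\cup R_2$, and let $d_C$ be the dimension function of $PG(C;R)$. For $X\subseteq C$ let $\eta(X)=d_1(X\cap B_1)+d_2(X\cap B_2)-d_0(X\cap A_0)$, where $d_i$ is the dimension function of $PG(B_i;R_i)$ and $d_0$ that of $PG(A_0;R_1|A_0)$, and let $\zeta(X)=\min\{\eta(Y):X\subseteq Y\subseteq C\}$. Then $d_C(X)=\zeta(X)$ for all $X\subseteq C$. Moreover, if $C'$ is any pregeometry on the set $C$ whose restrictions to $B_1$ and to $B_2$ are $PG(B_1;R_1)$ and $PG(B_2;R_2)$ respectively, then its dimension function satisfies $d_{C'}(X)\le\zeta(X)$ for all $X\subseteq C$.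
   Context: A set system is a pair $(A;R)$ where $R$ is a set of finite non-empty subsets of $A$; for $X\subseteq A$, $R[X]=\{r\in R:r\subseteq X\}$ and $\delta(X)=|X|-|R[X]|$; for $B\subseteq A$, $R|B=R[B]$. $\mathcal C$ is the class of finite set systems with $\delta(X)\ge0$ for all $X\subseteq A$. $X\le(A;R)$ means $\delta(X)\le\delta(X')$ for all $X\subseteq X'\subseteq A$. For a set system $(A;R)$ with $\delta\ge0$, $d(X)=\min\{\delta(Y):X\subseteq Y\subseteq A\}$, $\mathrm{cl}(X)=\{y:d(X\cup\{y\})=d(X)\}$, and $PG(A;R)$ is the pregeometry $(A,\mathrm{cl})$ with dimension function $d$. (Under the hypotheses, $(C;R)\in\mathcal C$.) The restriction of a pregeometry $(C,\mathrm{cl}')$ to $B\subseteq C$ has closure $X\mapsto\mathrm{cl}'(X)\cap B$. *)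

theory Defs
  imports Main
begin

definition restr :: "'a set set \<Rightarrow> 'a set \<Rightarrow> 'a set set" where
  "restr R X = {r \<in> R. r \<subseteq> X}"

definition delta :: "'a set set \<Rightarrow> 'a set \<Rightarrow> int" where
  "delta R X = int (card X) - int (card (restr R X))"

definition in_C :: "'a set \<Rightarrow> 'a set set \<Rightarrow> bool" where
  "in_C A R \<longleftrightarrow> finite A \<and> (\<forall>r\<in>R. finite r \<and> r \<noteq> {} \<and> r \<subseteq> A)
     \<and> (\<forall>X. X \<subseteq> A \<longrightarrow> delta R X \<ge> 0)"

definition self_suff :: "'a set \<Rightarrow> 'a set \<Rightarrow> 'a set set \<Rightarrow> bool" where
  "self_suff X A R \<longleftrightarrow> X \<subseteq> A \<and> (\<forall>X'. X \<subseteq> X' \<and> X' \<subseteq> A \<longrightarrow> delta R X \<le> delta R X')"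

definition ss_dim :: "'a set \<Rightarrow> 'a set set \<Rightarrow> 'a set \<Rightarrow> int" where
  "ss_dim A R X = Min {delta R Y | Y. X \<subseteq> Y \<and> Y \<subseteq> A}"

definition ss_cl :: "'a set \<Rightarrow> 'a set set \<Rightarrow> 'a set \<Rightarrow> 'a set" where
  "ss_cl A R X = {y \<in> A. ss_dim A R (X \<union> {y}) = ss_dim A R X}"

definition pregeometry :: "'a set \<Rightarrow> ('a set \<Rightarrow> 'a set) \<Rightarrow> bool" where
  "pregeometry C cl \<longleftrightarrow>
     (\<forall>X. X \<subseteq> C \<longrightarrow> X \<subseteq> cl X \<and> cl X \<subseteq> C) \<and>
     (\<forall>X Y. X \<subseteq> Y \<and> Y \<subseteq> C \<longrightarrow> cl X \<subseteq> cl Y) \<and>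
     (\<forall>X. X \<subseteq> C \<longrightarrow> cl (cl X) = cl X) \<and>
     (\<forall>X a b. X \<subseteq> C \<and> a \<in> C \<and> b \<in> C \<and> a \<in> cl (X \<union> {b}) \<and> a \<notin> cl X
          \<longrightarrow> b \<in> cl (X \<union> {a})) \<and>
     (\<forall>X a. X \<subseteq> C \<and> a \<in> cl X \<longrightarrow> (\<exists>X0. finite X0 \<and> X0 \<subseteq> X \<and> a \<in> cl X0))"

definition pg_dim :: "('a set \<Rightarrow> 'a set) \<Rightarrow> 'a set \<Rightarrow> nat" where
  "pg_dim cl X = Min {card Y | Y. Y \<subseteq> X \<and> X \<subseteq> cl Y}"

end

theory Submission
  imports Defs
begin


lemma restr_fin: "finite X \<Longrightarrow> finite (restr R X)"
  unfolding restr_def by (rule finite_subset[of _ "Pow X"]) auto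

lemma delta_submod:
  assumes "finite X" "finite Y"
  shows "delta R (X \<union> Y) + delta R (X \<inter> Y) \<le> delta R X + delta R Y"
proof -
  have c: "card X + card Y = card (X \<union> Y) + card (X \<inter> Y)" using assms card_Un_Int by blast
  have f: "finite (restr R X)" "finite (restr R Y)" using assms restr_fin by auto
  have r: "card (restr R X) + card (restr R Y) = card (restr R X \<union> restr R Y) + card (restr R X \<inter> restr R Y)"
    using f card_Un_Int by blast
  have i: "restr R X \<inter> restr R Y = restr R (X \<inter> Y)" unfolding restr_def by auto
  have u: "card (restr R X \<union> restr R Y) \<le> card (restr R (X \<union> Y))"
    by (rule card_mono) (auto simp: restr_def assms restr_fin[of "X \<union> Y"])
  have c': "int (card X) + int (card Y) = int (card (X \<union> Y)) + int (card (X \<inter> Y))" using c by (metis of_nat_add)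
  have r': "int (card (restr R X)) + int (card (restr R Y)) = int (card (restr R X \<union> restr R Y)) + int (card (restr R (X \<inter> Y)))"
    using r i by (metis of_nat_add)
  have u': "int (card (restr R X \<union> restr R Y)) \<le> int (card (restr R (X \<union> Y)))" using u by simp
  show ?thesis unfolding delta_def using c' r' u' by linarith
qed

lemma ss_dim_fin: "finite A \<Longrightarrow> finite {delta R Y | Y. X \<subseteq> Y \<and> Y \<subseteq> A}"
proof -
  assume "finite A"
  have "{delta R Y | Y. X \<subseteq> Y \<and> Y \<subseteq> A} \<subseteq> delta R ` Pow A" by auto
  then show ?thesis using \<open>finite A\<close> finite_subset by blast
qed

lemma ss_dim_le: "finite A \<Longrightarrow> X \<subseteq> Y \<Longrightarrow> Y \<subseteq> A \<Longrightarrow> ss_dim A R X \<le> delta R Y"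
  unfolding ss_dim_def by (rule Min_le) (auto simp: ss_dim_fin)

lemma ss_dim_ex: "finite A \<Longrightarrow> X \<subseteq> A \<Longrightarrow> \<exists>Y. X \<subseteq> Y \<and> Y \<subseteq> A \<and> ss_dim A R X = delta R Y"
proof -
  assume a: "finite A" "X \<subseteq> A"
  have "ss_dim A R X \<in> {delta R Y | Y. X \<subseteq> Y \<and> Y \<subseteq> A}"
    unfolding ss_dim_def by (rule Min_in) (use a ss_dim_fin in auto)
  then show ?thesis by auto
qed

lemma ss_dim_mono: "finite A \<Longrightarrow> X \<subseteq> Y \<Longrightarrow> Y \<subseteq> A \<Longrightarrow> ss_dim A R X \<le> ss_dim A R Y"
  by (metis ss_dim_ex ss_dim_le order_trans)

lemma ss_dim_nonneg: "in_C A R \<Longrightarrow> X \<subseteq> A \<Longrightarrow> ss_dim A R X \<ge> 0"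
  unfolding in_C_def by (metis ss_dim_ex)

lemma ss_dim_submod:
  assumes "finite A" "X \<subseteq> A" "Y \<subseteq> A"
  shows "ss_dim A R (X \<union> Y) + ss_dim A R (X \<inter> Y) \<le> ss_dim A R X + ss_dim A R Y"
proof -
  obtain W where W: "X \<subseteq> W" "W \<subseteq> A" "ss_dim A R X = delta R W" using ss_dim_ex assms by metis
  obtain V where V: "Y \<subseteq> V" "V \<subseteq> A" "ss_dim A R Y = delta R V" using ss_dim_ex assms by metis
  have "ss_dim A R (X \<union> Y) \<le> delta R (W \<union> V)" using W V assms by (intro ss_dim_le) auto
  moreover have "ss_dim A R (X \<inter> Y) \<le> delta R (W \<inter> V)" using W V assms by (intro ss_dim_le) auto
  moreover have "delta R (W \<union> V) + delta R (W \<inter> V) \<le> delta R W + delta R V"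
    using W(2) V(2) assms(1) by (intro delta_submod) (meson finite_subset)+
  ultimately show ?thesis using W V by linarith
qed

lemma greedy:
  assumes fA: "finite A" and S0: "S0 \<subseteq> A" and W: "finite W" "W \<subseteq> A"
  shows "\<exists>S. S0 \<subseteq> S \<and> S \<subseteq> S0 \<union> W \<and> ss_dim A R S = ss_dim A R (S0 \<union> W)
          \<and> int (card S) + ss_dim A R S0 \<le> int (card S0) + ss_dim A R (S0 \<union> W)"
  using W
proof (induction W rule: finite_induct)
  case empty
  show ?case by (intro exI[of _ S0]) simp
next
  case (insert z W)
  then obtain S where S: "S0 \<subseteq> S" "S \<subseteq> S0 \<union> W" "ss_dim A R S = ss_dim A R (S0 \<union> W)"
     "int (card S) + ss_dim A R S0 \<le> int (card S0) + ss_dim A R (S0 \<union> W)" by blast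
  have zA: "z \<in> A" using insert.prems by blast
  have WA: "S0 \<union> W \<subseteq> A" using insert.prems S0 by blast
  have m: "ss_dim A R (S0 \<union> W) \<le> ss_dim A R (S0 \<union> insert z W)"
    using WA zA fA by (intro ss_dim_mono) blast+
  show ?case
  proof (cases "ss_dim A R (S0 \<union> insert z W) = ss_dim A R (S0 \<union> W)")
    case True
    then show ?thesis using S by (intro exI[of _ S]) (simp, blast)
  next
    case False
    then have gt: "ss_dim A R (S0 \<union> W) + 1 \<le> ss_dim A R (S0 \<union> insert z W)" using m by linarith
    have zS: "z \<notin> S"
    proof
      assume "z \<in> S"
      then have "S0 \<union> insert z W = S0 \<union> W" using S by blast
      then show False using False by simp
    qed
    have SA: "S \<subseteq> A" using S WA by blast
    have fS: "finite S" using SA fA by (rule finite_subset)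
    have sub: "ss_dim A R (insert z S \<union> (S0 \<union> W)) + ss_dim A R (insert z S \<inter> (S0 \<union> W))
        \<le> ss_dim A R (insert z S) + ss_dim A R (S0 \<union> W)"
      using SA zA WA fA by (intro ss_dim_submod) blast+
    have e1: "insert z S \<union> (S0 \<union> W) = S0 \<union> insert z W" using S by blast
    have e2: "ss_dim A R S \<le> ss_dim A R (insert z S \<inter> (S0 \<union> W))"
      using S WA fA by (intro ss_dim_mono) blast+
    have ge: "ss_dim A R (S0 \<union> insert z W) \<le> ss_dim A R (insert z S)"
      using sub e1 e2 S(3) by simp
    have le: "ss_dim A R (insert z S) \<le> ss_dim A R (S0 \<union> insert z W)"
      using S WA zA fA by (intro ss_dim_mono) blast+
    have cS: "int (card (insert z S)) = int (card S) + 1" using zS fS by simp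
    have a1: "S0 \<subseteq> insert z S" using S by blast
    have a2: "insert z S \<subseteq> S0 \<union> insert z W" using S by blast
    have a3: "ss_dim A R (insert z S) = ss_dim A R (S0 \<union> insert z W)" using ge le by linarith
    have a4: "int (card (insert z S)) + ss_dim A R S0 \<le> int (card S0) + ss_dim A R (S0 \<union> insert z W)"
      using cS S(4) gt by linarith
    show ?thesis using a1 a2 a3 a4 by blast
  qed
qed



definition indep :: "('a set \<Rightarrow> 'a set) \<Rightarrow> 'a set \<Rightarrow> bool" where
  "indep cl S \<longleftrightarrow> (\<forall>s\<in>S. s \<notin> cl (S - {s}))"

lemma pg_ext: "pregeometry C cl \<Longrightarrow> X \<subseteq> C \<Longrightarrow> X \<subseteq> cl X"
  unfolding pregeometry_def by simp
lemma pg_sub: "pregeometry C cl \<Longrightarrow> X \<subseteq> C \<Longrightarrow> cl X \<subseteq> C"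
  unfolding pregeometry_def by simp
lemma pg_mono: "pregeometry C cl \<Longrightarrow> X \<subseteq> Y \<Longrightarrow> Y \<subseteq> C \<Longrightarrow> cl X \<subseteq> cl Y"
  unfolding pregeometry_def by simp
lemma pg_idem: "pregeometry C cl \<Longrightarrow> X \<subseteq> C \<Longrightarrow> cl (cl X) = cl X"
  unfolding pregeometry_def by simp
lemma pg_exch: "pregeometry C cl \<Longrightarrow> X \<subseteq> C \<Longrightarrow> a \<in> C \<Longrightarrow> b \<in> C \<Longrightarrow> a \<in> cl (X \<union> {b})
   \<Longrightarrow> a \<notin> cl X \<Longrightarrow> b \<in> cl (X \<union> {a})"
  unfolding pregeometry_def by (elim conjE) (drule spec[of _ X], drule spec[of _ a], drule spec[of _ b], simp)

lemma indep_subset: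
  assumes pg: "pregeometry C cl" and SC: "S \<subseteq> C" and ind: "indep cl S" and TS: "T \<subseteq> S"
  shows "indep cl T"
  unfolding indep_def
proof
  fix s assume s: "s \<in> T"
  have "T - {s} \<subseteq> S - {s}" using TS by blast
  then have "cl (T - {s}) \<subseteq> cl (S - {s})" using SC by (intro pg_mono[OF pg]) auto
  moreover have "s \<notin> cl (S - {s})" using ind s TS unfolding indep_def by blast
  ultimately show "s \<notin> cl (T - {s})" by blast
qed

lemma indep_insert:
  assumes pg: "pregeometry C cl" and I: "I \<subseteq> C" "indep cl I" and t: "t \<in> C" "t \<notin> cl I"
  shows "indep cl (insert t I)"
  unfolding indep_def
proof
  fix s assume s: "s \<in> insert t I"
  have tI: "t \<notin> I" using t pg_ext[OF pg I(1)] by blast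
  show "s \<notin> cl (insert t I - {s})"
  proof (cases "s = t")
    case True
    then have "insert t I - {s} = I" using tI by blast
    then show ?thesis using True t by simp
  next
    case False
    then have sI: "s \<in> I" using s by blast
    show ?thesis
    proof
      assume h: "s \<in> cl (insert t I - {s})"
      have e: "insert t I - {s} = (I - {s}) \<union> {t}" using False by blast
      have n: "s \<notin> cl (I - {s})" using I(2) sI unfolding indep_def by blast
      have h': "s \<in> cl ((I - {s}) \<union> {t})" using h e by simp
      have IsC: "I - {s} \<subseteq> C" using I(1) by blast
      have sC: "s \<in> C" using I(1) sI by blast
      have "t \<in> cl ((I - {s}) \<union> {s})"
        by (rule pg_exch[OF pg IsC sC t(1) h' n])
      moreover have "(I - {s}) \<union> {s} = I" using sI by blast
      ultimately show False using t by simp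
    qed
  qed
qed

lemma steinitz:
  assumes pg: "pregeometry C cl" and T: "finite T" "T \<subseteq> C"
  shows "finite S \<Longrightarrow> S \<subseteq> C \<Longrightarrow> indep cl S \<Longrightarrow> S \<subseteq> cl T \<Longrightarrow> card S \<le> card T"
proof (induction "card (S - T)" arbitrary: S rule: less_induct)
  case (less S)
  show ?case
  proof (cases "S \<subseteq> T")
    case True
    then show ?thesis using T(1) by (simp add: card_mono)
  next
    case False
    then obtain s where s: "s \<in> S" "s \<notin> T" by blast
    have ns: "s \<notin> cl (S - {s})" using less.prems(3) s(1) unfolding indep_def by blast
    have SsC: "S - {s} \<subseteq> C" using less.prems(2) by blast
    have "\<exists>t\<in>T. t \<notin> cl (S - {s})"
    proof (rule ccontr)
      assume "\<not> ?thesis"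
      then have "T \<subseteq> cl (S - {s})" by blast
      then have "cl T \<subseteq> cl (cl (S - {s}))" using pg_sub[OF pg SsC] by (intro pg_mono[OF pg]) blast+
      then have "cl T \<subseteq> cl (S - {s})" using pg_idem[OF pg SsC] by simp
      then show False using ns s(1) less.prems(4) by blast
    qed
    then obtain t where t: "t \<in> T" "t \<notin> cl (S - {s})" by blast
    have tS: "t \<notin> S - {s}" using t(2) pg_ext[OF pg SsC] by blast
    define S' where "S' = insert t (S - {s})"
    have ind: "indep cl S'" unfolding S'_def
      using indep_insert[OF pg SsC _ _ t(2)] indep_subset[OF pg less.prems(2) less.prems(3), of "S - {s}"] t(1) T(2)
      by blast
    have fS: "finite (S - {s})" using less.prems(1) by blast
    have cS': "card S' = card S" unfolding S'_def using tS fS s(1) less.prems(1) card_gt_0_iff[of S]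
        by (auto simp del: card_gt_0_iff)
    have "S' - T = (S - T) - {s}" unfolding S'_def using t(1) by blast
    then have lt: "card (S' - T) < card (S - T)" using s less.prems(1)
      by (metis Diff_iff card_Diff1_less finite_Diff)
    have "S' \<subseteq> cl T" unfolding S'_def using less.prems(4) t(1) pg_ext[OF pg T(2)] by blast
    moreover have "S' \<subseteq> C" unfolding S'_def using SsC t(1) T(2) by blast
    moreover have "finite S'" unfolding S'_def using fS by simp
    ultimately have "card S' \<le> card T" using less.hyps[OF lt] ind by blast
    then show ?thesis using cS' by simp
  qed
qed

lemma pg_dim_le:
  assumes pg: "pregeometry C cl" and X: "finite X" "X \<subseteq> C" and T: "finite T" "T \<subseteq> C" "X \<subseteq> cl T"
  shows "pg_dim cl X \<le> card T"
proof -
  define P where "P = (\<lambda>I. I \<subseteq> X \<and> indep cl I)"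
  have P0: "P {}" unfolding P_def indep_def by simp
  have bd: "\<forall>I. P I \<longrightarrow> card I < card X + 1"
    unfolding P_def using X(1) by (simp add: card_mono less_Suc_eq_le)
  obtain I where I: "P I" "\<forall>J. P J \<longrightarrow> card J \<le> card I"
    using Lattices_Big.ex_has_greatest_nat[of P "{}" card, OF P0 bd] by blast
  have IX: "I \<subseteq> X" "indep cl I" using I(1) unfolding P_def by auto
  have fI: "finite I" using IX(1) X(1) by (rule finite_subset)
  have IC: "I \<subseteq> C" using IX X by blast
  have span: "X \<subseteq> cl I"
  proof
    fix x assume x: "x \<in> X"
    show "x \<in> cl I"
    proof (rule ccontr)
      assume nx: "x \<notin> cl I"
      have xI: "x \<notin> I" using nx pg_ext[OF pg IC] by blast
      have "indep cl (insert x I)" using indep_insert[OF pg IC IX(2) _ nx] x X(2) by blast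
      then have "P (insert x I)" unfolding P_def using x IX by blast
      then have "card (insert x I) \<le> card I" using I(2) by blast
      then show False using xI fI by simp
    qed
  qed
  have "pg_dim cl X \<le> card I"
    unfolding pg_dim_def
  proof (rule Min_le)
    have "{card Y |Y. Y \<subseteq> X \<and> X \<subseteq> cl Y} \<subseteq> card ` Pow X" by blast
    then show "finite {card Y |Y. Y \<subseteq> X \<and> X \<subseteq> cl Y}" using X(1) by (meson finite_imageI finite_Pow_iff finite_subset)
    show "card I \<in> {card Y |Y. Y \<subseteq> X \<and> X \<subseteq> cl Y}" using IX(1) span by blast
  qed
  also have "card I \<le> card T"
    using steinitz[OF pg T(1) T(2) fI IC IX(2)] IX(1) T(3) by blast
  finally show ?thesis .
qed



lemma inC_fin: "in_C B R \<Longrightarrow> finite B" unfolding in_C_def by blast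
lemma inC_sub: "in_C B R \<Longrightarrow> r \<in> R \<Longrightarrow> r \<subseteq> B" unfolding in_C_def by blast
lemma inC_nonneg: "in_C B R \<Longrightarrow> W \<subseteq> B \<Longrightarrow> delta R W \<ge> 0" unfolding in_C_def by blast

lemma delta_restr: "W \<subseteq> A \<Longrightarrow> delta (restr R A) W = delta R W"
proof -
  assume "W \<subseteq> A"
  then have "restr (restr R A) W = restr R W" unfolding restr_def by blast
  then show ?thesis unfolding delta_def by simp
qed

lemma delta_12:
  assumes agree: "restr R1 (B1 \<inter> B2) = restr R2 (B1 \<inter> B2)" and W: "W \<subseteq> B1 \<inter> B2"
  shows "delta R2 W = delta R1 W"
proof -
  have "restr R2 W = restr R1 W"
  proof
    show "restr R2 W \<subseteq> restr R1 W"
    proof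
      fix r assume r: "r \<in> restr R2 W"
      then have "r \<in> restr R2 (B1 \<inter> B2)" using W unfolding restr_def by blast
      then have "r \<in> R1" using agree unfolding restr_def by blast
      then show "r \<in> restr R1 W" using r unfolding restr_def by blast
    qed
    show "restr R1 W \<subseteq> restr R2 W"
    proof
      fix r assume r: "r \<in> restr R1 W"
      then have "r \<in> restr R1 (B1 \<inter> B2)" using W unfolding restr_def by blast
      then have "r \<in> R2" using agree unfolding restr_def by blast
      then show "r \<in> restr R2 W" using r unfolding restr_def by blast
    qed
  qed
  then show ?thesis unfolding delta_def by simp
qed

lemma delta_union:
  assumes C1: "in_C B1 R1" and C2: "in_C B2 R2"
    and agree: "restr R1 (B1 \<inter> B2) = restr R2 (B1 \<inter> B2)"
    and Y: "Y \<subseteq> B1 \<union> B2"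
  shows "delta (R1 \<union> R2) Y = delta R1 (Y \<inter> B1) + delta R2 (Y \<inter> B2) - delta R1 (Y \<inter> (B1 \<inter> B2))"
proof -
  have f1: "finite B1" "finite B2" using C1 C2 inC_fin by blast+
  have fY1: "finite (Y \<inter> B1)" "finite (Y \<inter> B2)" using f1 by blast+
  have cY: "card (Y \<inter> B1) + card (Y \<inter> B2) = card Y + card (Y \<inter> (B1 \<inter> B2))"
  proof -
    have "Y \<inter> B1 \<union> Y \<inter> B2 = Y" using Y by blast
    moreover have "Y \<inter> B1 \<inter> (Y \<inter> B2) = Y \<inter> (B1 \<inter> B2)" by blast
    ultimately show ?thesis using card_Un_Int[OF fY1] by simp
  qed
  have u: "restr (R1 \<union> R2) Y = restr R1 (Y \<inter> B1) \<union> restr R2 (Y \<inter> B2)"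
    unfolding restr_def using inC_sub[OF C1] inC_sub[OF C2] by blast
  have i: "restr R1 (Y \<inter> B1) \<inter> restr R2 (Y \<inter> B2) = restr R1 (Y \<inter> (B1 \<inter> B2))"
  proof
    show "restr R1 (Y \<inter> B1) \<inter> restr R2 (Y \<inter> B2) \<subseteq> restr R1 (Y \<inter> (B1 \<inter> B2))"
      unfolding restr_def by blast
    show "restr R1 (Y \<inter> (B1 \<inter> B2)) \<subseteq> restr R1 (Y \<inter> B1) \<inter> restr R2 (Y \<inter> B2)"
    proof
      fix r assume r: "r \<in> restr R1 (Y \<inter> (B1 \<inter> B2))"
      then have "r \<in> restr R1 (B1 \<inter> B2)" unfolding restr_def by blast
      then have "r \<in> R2" using agree unfolding restr_def by blast
      then show "r \<in> restr R1 (Y \<inter> B1) \<inter> restr R2 (Y \<inter> B2)" using r unfolding restr_def by blast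
    qed
  qed
  have cR: "card (restr R1 (Y \<inter> B1)) + card (restr R2 (Y \<inter> B2))
      = card (restr (R1 \<union> R2) Y) + card (restr R1 (Y \<inter> (B1 \<inter> B2)))"
    using card_Un_Int[OF restr_fin[OF fY1(1)] restr_fin[OF fY1(2)]] u i by simp
  have cY': "int (card (Y \<inter> B1)) + int (card (Y \<inter> B2)) = int (card Y) + int (card (Y \<inter> (B1 \<inter> B2)))"
    using cY by (metis of_nat_add)
  have cR': "int (card (restr R1 (Y \<inter> B1))) + int (card (restr R2 (Y \<inter> B2)))
      = int (card (restr (R1 \<union> R2) Y)) + int (card (restr R1 (Y \<inter> (B1 \<inter> B2))))"
    using cR by (metis of_nat_add)
  show ?thesis unfolding delta_def using cY' cR' by linarith
qed

lemma ss_dim_A0: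
  assumes C: "in_C B R" and ss: "self_suff A B R" and Z: "Z \<subseteq> A"
  shows "ss_dim A (restr R A) Z \<le> ss_dim B R Z"
proof -
  have fB: "finite B" using C inC_fin by blast
  have AB: "A \<subseteq> B" using ss unfolding self_suff_def by blast
  have fA: "finite A" using fB AB by (rule finite_subset[rotated])
  obtain W where W: "Z \<subseteq> W" "W \<subseteq> B" "ss_dim B R Z = delta R W"
    using ss_dim_ex[OF fB] Z AB by (metis order_trans)
  have fW: "finite W" using W(2) fB by (rule finite_subset)
  have sm: "delta R (W \<union> A) + delta R (W \<inter> A) \<le> delta R W + delta R A"
    by (rule delta_submod[OF fW fA])
  have "delta R A \<le> delta R (W \<union> A)" using ss W(2) unfolding self_suff_def by blast
  then have le: "delta R (W \<inter> A) \<le> delta R W" using sm by linarith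
  have "ss_dim A (restr R A) Z \<le> delta (restr R A) (W \<inter> A)"
    using W Z by (intro ss_dim_le[OF fA]) blast+
  also have "\<dots> = delta R (W \<inter> A)" by (rule delta_restr) blast
  finally show ?thesis using le W(3) by linarith
qed

lemma span_lemma:
  assumes fB: "finite B" and SZ: "S \<subseteq> Z" "Z \<subseteq> B" and eq: "ss_dim B R S = ss_dim B R Z"
  shows "Z \<subseteq> ss_cl B R S"
proof
  fix z assume z: "z \<in> Z"
  have "ss_dim B R S \<le> ss_dim B R (S \<union> {z})" using SZ z by (intro ss_dim_mono[OF fB]) blast+
  moreover have "ss_dim B R (S \<union> {z}) \<le> ss_dim B R Z" using SZ z by (intro ss_dim_mono[OF fB]) blast+
  ultimately have "ss_dim B R (S \<union> {z}) = ss_dim B R S" using eq by linarith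
  then show "z \<in> ss_cl B R S" unfolding ss_cl_def using z SZ by blast
qed



theorem lemma6p7:
  fixes B1 B2 :: "'a set" and R1 R2 :: "'a set set"
  assumes C1: "in_C B1 R1" and C2: "in_C B2 R2"
    and agree: "restr R1 (B1 \<inter> B2) = restr R2 (B1 \<inter> B2)"
    and ss1: "self_suff (B1 \<inter> B2) B1 R1"
    and ss2: "self_suff (B1 \<inter> B2) B2 R2"
  defines "A0 \<equiv> B1 \<inter> B2"
    and "C \<equiv> B1 \<union> B2"
    and "R \<equiv> R1 \<union> R2"
  defines "\<eta> \<equiv> \<lambda>X. ss_dim B1 R1 (X \<inter> B1) + ss_dim B2 R2 (X \<inter> B2)
                    - ss_dim A0 (restr R1 A0) (X \<inter> A0)"
  defines "\<zeta> \<equiv> \<lambda>X. Min {\<eta> Y | Y. X \<subseteq> Y \<and> Y \<subseteq> C}"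
  shows "(\<forall>X. X \<subseteq> C \<longrightarrow> ss_dim C R X = \<zeta> X) \<and>
         (\<forall>cl'. pregeometry C cl'
             \<and> (\<forall>X. X \<subseteq> B1 \<longrightarrow> cl' X \<inter> B1 = ss_cl B1 R1 X)
             \<and> (\<forall>X. X \<subseteq> B2 \<longrightarrow> cl' X \<inter> B2 = ss_cl B2 R2 X)
           \<longrightarrow> (\<forall>X. X \<subseteq> C \<longrightarrow> int (pg_dim cl' X) \<le> \<zeta> X))"
proof -
  have fB1: "finite B1" using C1 inC_fin by blast
  have fB2: "finite B2" using C2 inC_fin by blast
  have fC: "finite C" unfolding C_def using fB1 fB2 by blast
  have fA0: "finite A0" unfolding A0_def using fB1 by blast
  have A0B1: "A0 \<subseteq> B1" and A0B2: "A0 \<subseteq> B2" unfolding A0_def by blast+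
  have B1C: "B1 \<subseteq> C" and B2C: "B2 \<subseteq> C" unfolding C_def by blast+
  define d1 where "d1 = ss_dim B1 R1"
  define d2 where "d2 = ss_dim B2 R2"
  define d0 where "d0 = ss_dim A0 (restr R1 A0)"
  have eta: "\<And>Y. \<eta> Y = d1 (Y \<inter> B1) + d2 (Y \<inter> B2) - d0 (Y \<inter> A0)"
    unfolding \<eta>_def d1_def d2_def d0_def by simp
  have F1: "\<And>Y. Y \<subseteq> C \<Longrightarrow> delta R Y = delta R1 (Y \<inter> B1) + delta R2 (Y \<inter> B2) - delta R1 (Y \<inter> A0)"
    unfolding R_def A0_def C_def using delta_union[OF C1 C2 agree] by blast
  have F0: "\<And>W. W \<subseteq> A0 \<Longrightarrow> delta (restr R1 A0) W = delta R1 W" by (rule delta_restr)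
  have F12: "\<And>W. W \<subseteq> A0 \<Longrightarrow> delta R2 W = delta R1 W"
    unfolding A0_def using delta_12[OF agree] by blast
  have FB1: "\<And>W. W \<subseteq> B1 \<Longrightarrow> delta R W = delta R1 W"
  proof -
    fix W assume W: "W \<subseteq> B1"
    have "W \<inter> B1 = W" "W \<inter> B2 = W \<inter> A0" using W unfolding A0_def by blast+
    then show "delta R W = delta R1 W" using F1[of W] F12[of "W \<inter> A0"] W B1C by simp
  qed
  have FB2: "\<And>W. W \<subseteq> B2 \<Longrightarrow> delta R W = delta R2 W"
  proof -
    fix W assume W: "W \<subseteq> B2"
    have "W \<inter> B2 = W" "W \<inter> B1 = W \<inter> A0" using W unfolding A0_def by blast+
    then show "delta R W = delta R2 W" using F1[of W] F12[of "W \<inter> A0"] W B2C by simp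
  qed
  have zeta_in: "\<And>X. X \<subseteq> C \<Longrightarrow> \<exists>Y. X \<subseteq> Y \<and> Y \<subseteq> C \<and> \<zeta> X = \<eta> Y"
  proof -
    fix X assume X: "X \<subseteq> C"
    have fin: "finite {\<eta> Y | Y. X \<subseteq> Y \<and> Y \<subseteq> C}"
    proof -
      have "{\<eta> Y | Y. X \<subseteq> Y \<and> Y \<subseteq> C} \<subseteq> \<eta> ` Pow C" by blast
      then show ?thesis using fC by (meson finite_imageI finite_Pow_iff finite_subset)
    qed
    have "\<zeta> X \<in> {\<eta> Y | Y. X \<subseteq> Y \<and> Y \<subseteq> C}" unfolding \<zeta>_def
      by (rule Min_in[OF fin]) (use X in blast)
    then show "\<exists>Y. X \<subseteq> Y \<and> Y \<subseteq> C \<and> \<zeta> X = \<eta> Y" by blast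
  qed
  have zeta_le: "\<And>X Y. X \<subseteq> Y \<Longrightarrow> Y \<subseteq> C \<Longrightarrow> \<zeta> X \<le> \<eta> Y"
  proof -
    fix X Y assume XY: "X \<subseteq> Y" "Y \<subseteq> C"
    have fin: "finite {\<eta> Y | Y. X \<subseteq> Y \<and> Y \<subseteq> C}"
    proof -
      have "{\<eta> Y | Y. X \<subseteq> Y \<and> Y \<subseteq> C} \<subseteq> \<eta> ` Pow C" by blast
      then show ?thesis using fC by (meson finite_imageI finite_Pow_iff finite_subset)
    qed
    show "\<zeta> X \<le> \<eta> Y" unfolding \<zeta>_def by (rule Min_le[OF fin]) (use XY in blast)
  qed
  have part1: "\<forall>X. X \<subseteq> C \<longrightarrow> ss_dim C R X = \<zeta> X"
  proof (intro allI impI)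
    fix X assume X: "X \<subseteq> C"
    obtain Y where Y: "X \<subseteq> Y" "Y \<subseteq> C" "\<zeta> X = \<eta> Y" using zeta_in[OF X] by blast
    obtain W1 where W1: "Y \<inter> B1 \<subseteq> W1" "W1 \<subseteq> B1" "d1 (Y \<inter> B1) = delta R1 W1"
      unfolding d1_def using ss_dim_ex[OF fB1, of "Y \<inter> B1" R1] by blast
    obtain W2 where W2: "Y \<inter> B2 \<subseteq> W2" "W2 \<subseteq> B2" "d2 (Y \<inter> B2) = delta R2 W2"
      unfolding d2_def using ss_dim_ex[OF fB2, of "Y \<inter> B2" R2] by blast
    have fW: "finite W1" "finite W2" using W1(2) W2(2) fB1 fB2 finite_subset by blast+
    have W12: "W1 \<inter> W2 \<subseteq> A0" using W1(2) W2(2) unfolding A0_def by blast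
    have YC': "Y \<subseteq> B1 \<union> B2" using Y(2) C_def by simp
    have XW: "X \<subseteq> W1 \<union> W2" using Y(1) YC' W1(1) W2(1) by blast
    have WC: "W1 \<union> W2 \<subseteq> C" using W1(2) W2(2) B1C B2C by blast
    have up1: "ss_dim C R X \<le> delta R (W1 \<union> W2)" by (rule ss_dim_le[OF fC XW WC])
    have sm: "delta R (W1 \<union> W2) + delta R (W1 \<inter> W2) \<le> delta R W1 + delta R W2"
      by (rule delta_submod[OF fW])
    have d0le: "d0 (Y \<inter> A0) \<le> delta (restr R1 A0) (W1 \<inter> W2)"
      unfolding d0_def using W1 W2 W12 unfolding A0_def by (intro ss_dim_le[OF fA0[unfolded A0_def]]) blast+
    have WB1: "W1 \<inter> W2 \<subseteq> B1" using W1(2) by blast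
    have "delta R (W1 \<inter> W2) = delta (restr R1 A0) (W1 \<inter> W2)"
      using FB1[OF WB1] F0[OF W12] by simp
    then have "ss_dim C R X \<le> \<eta> Y"
      using up1 sm d0le FB1[OF W1(2)] FB2[OF W2(2)] W1(3) W2(3) eta[of Y] by linarith
    then have le1: "ss_dim C R X \<le> \<zeta> X" using Y(3) by simp
    define P where "P = (\<lambda>Y. X \<subseteq> Y \<and> Y \<subseteq> C \<and> delta R Y = ss_dim C R X)"
    obtain Y0 where "X \<subseteq> Y0" "Y0 \<subseteq> C" "ss_dim C R X = delta R Y0" using ss_dim_ex[OF fC X] by blast
    then have PY0: "P Y0" unfolding P_def by simp
    have bd: "\<forall>Y. P Y \<longrightarrow> card Y < card C + 1"
      unfolding P_def using fC by (simp add: card_mono less_Suc_eq_le)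
    obtain Z where Z: "P Z" "\<forall>Y. P Y \<longrightarrow> card Y \<le> card Z"
      using Lattices_Big.ex_has_greatest_nat[of P Y0 card, OF PY0 bd] by blast
    have ZC: "X \<subseteq> Z" "Z \<subseteq> C" "delta R Z = ss_dim C R X" using Z(1) unfolding P_def by auto
    have fZ: "finite Z" using ZC(2) fC by (rule finite_subset)
    have key: "\<And>W. W \<subseteq> C \<Longrightarrow> delta R W \<le> delta R (Z \<inter> W) \<Longrightarrow> W \<subseteq> Z"
    proof -
      fix W assume W: "W \<subseteq> C" "delta R W \<le> delta R (Z \<inter> W)"
      have fW: "finite W" using W(1) fC by (rule finite_subset)
      have "delta R (Z \<union> W) + delta R (Z \<inter> W) \<le> delta R Z + delta R W" by (rule delta_submod[OF fZ fW])
      moreover have "ss_dim C R X \<le> delta R (Z \<union> W)" using ZC W by (intro ss_dim_le[OF fC]) blast+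
      ultimately have dd: "delta R (Z \<union> W) = ss_dim C R X" using ZC(3) W(2) by linarith
      have "X \<subseteq> Z \<union> W" "Z \<union> W \<subseteq> C" using ZC W by blast+
      then have "P (Z \<union> W)" unfolding P_def using dd by blast
      then have "card (Z \<union> W) \<le> card Z" using Z(2) by blast
      then have "Z \<union> W = Z" using fZ fW by (metis Un_upper1 card_seteq finite_Un)
      then show "W \<subseteq> Z" by blast
    qed
    obtain V1 where V1: "Z \<inter> B1 \<subseteq> V1" "V1 \<subseteq> B1" "d1 (Z \<inter> B1) = delta R1 V1"
      unfolding d1_def using ss_dim_ex[OF fB1, of "Z \<inter> B1" R1] by blast
    obtain V2 where V2: "Z \<inter> B2 \<subseteq> V2" "V2 \<subseteq> B2" "d2 (Z \<inter> B2) = delta R2 V2"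
      unfolding d2_def using ss_dim_ex[OF fB2, of "Z \<inter> B2" R2] by blast
    obtain V0 where V0: "Z \<inter> A0 \<subseteq> V0" "V0 \<subseteq> A0" "d0 (Z \<inter> A0) = delta (restr R1 A0) V0"
      unfolding d0_def using ss_dim_ex[OF fA0, of "Z \<inter> A0" "restr R1 A0"] by blast
    have i1: "Z \<inter> V1 = Z \<inter> B1" using V1 by blast
    have i2: "Z \<inter> V2 = Z \<inter> B2" using V2 by blast
    have i0: "Z \<inter> V0 = Z \<inter> A0" using V0 by blast
    have e1: "d1 (Z \<inter> B1) \<le> delta R1 (Z \<inter> B1)" unfolding d1_def by (rule ss_dim_le[OF fB1]) blast+
    have e2: "d2 (Z \<inter> B2) \<le> delta R2 (Z \<inter> B2)" unfolding d2_def by (rule ss_dim_le[OF fB2]) blast+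
    have e0: "d0 (Z \<inter> A0) \<le> delta (restr R1 A0) (Z \<inter> A0)" unfolding d0_def by (rule ss_dim_le[OF fA0]) blast+
    have "V1 \<subseteq> Z"
    proof (rule key)
      show "V1 \<subseteq> C" using V1(2) B1C by blast
      have "delta R (Z \<inter> V1) = delta R1 (Z \<inter> B1)" using i1 FB1[of "Z \<inter> B1"] by simp
      then show "delta R V1 \<le> delta R (Z \<inter> V1)" using FB1[OF V1(2)] V1(3) e1 by linarith
    qed
    then have g1: "d1 (Z \<inter> B1) = delta R1 (Z \<inter> B1)" using V1 by (metis Int_absorb1 Int_commute i1)
    have "V2 \<subseteq> Z"
    proof (rule key)
      show "V2 \<subseteq> C" using V2(2) B2C by blast
      have "delta R (Z \<inter> V2) = delta R2 (Z \<inter> B2)" using i2 FB2[of "Z \<inter> B2"] by simp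
      then show "delta R V2 \<le> delta R (Z \<inter> V2)" using FB2[OF V2(2)] V2(3) e2 by linarith
    qed
    then have g2: "d2 (Z \<inter> B2) = delta R2 (Z \<inter> B2)" using V2 by (metis Int_absorb1 Int_commute i2)
    have V0B: "V0 \<subseteq> B1" using V0(2) A0B1 by blast
    have ZA: "Z \<inter> A0 \<subseteq> A0" "Z \<inter> A0 \<subseteq> B1" using A0B1 by blast+
    have h0: "delta R V0 = delta (restr R1 A0) V0" using FB1[OF V0B] F0[OF V0(2)] by simp
    have h0': "delta R (Z \<inter> A0) = delta (restr R1 A0) (Z \<inter> A0)" using FB1[OF ZA(2)] F0[OF ZA(1)] by simp
    have "V0 \<subseteq> Z"
    proof (rule key)
      show "V0 \<subseteq> C" using V0B B1C by blast
      show "delta R V0 \<le> delta R (Z \<inter> V0)" using h0 h0' i0 V0(3) e0 by simp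
    qed
    then have g0: "d0 (Z \<inter> A0) = delta (restr R1 A0) (Z \<inter> A0)" using V0 by (metis Int_absorb1 Int_commute i0)
    have "\<eta> Z = delta R Z" using eta[of Z] g1 g2 g0 F1[OF ZC(2)] F0[of "Z \<inter> A0"] by simp
    then have "\<zeta> X \<le> ss_dim C R X" using zeta_le[OF ZC(1) ZC(2)] ZC(3) by simp
    then show "ss_dim C R X = \<zeta> X" using le1 by simp
  qed
  have part2: "\<forall>cl'. pregeometry C cl'
             \<and> (\<forall>X. X \<subseteq> B1 \<longrightarrow> cl' X \<inter> B1 = ss_cl B1 R1 X)
             \<and> (\<forall>X. X \<subseteq> B2 \<longrightarrow> cl' X \<inter> B2 = ss_cl B2 R2 X)
           \<longrightarrow> (\<forall>X. X \<subseteq> C \<longrightarrow> int (pg_dim cl' X) \<le> \<zeta> X)"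
  proof (intro allI impI)
    fix cl' X
    assume H: "pregeometry C cl'
             \<and> (\<forall>X. X \<subseteq> B1 \<longrightarrow> cl' X \<inter> B1 = ss_cl B1 R1 X)
             \<and> (\<forall>X. X \<subseteq> B2 \<longrightarrow> cl' X \<inter> B2 = ss_cl B2 R2 X)"
      and X: "X \<subseteq> C"
    have pg: "pregeometry C cl'" using H by blast
    have H1: "\<And>S. S \<subseteq> B1 \<Longrightarrow> cl' S \<inter> B1 = ss_cl B1 R1 S" using conjunct1[OF conjunct2[OF H]] by blast
    have H2: "\<And>S. S \<subseteq> B2 \<Longrightarrow> cl' S \<inter> B2 = ss_cl B2 R2 S" using conjunct2[OF conjunct2[OF H]] by blast
    obtain Y where Y: "X \<subseteq> Y" "Y \<subseteq> C" "\<zeta> X = \<eta> Y" using zeta_in[OF X] by blast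
    have YC': "Y \<subseteq> B1 \<union> B2" using Y(2) C_def by simp
    have fY0: "finite (Y \<inter> A0)" "Y \<inter> A0 \<subseteq> A0" using fA0 by simp_all
    have gS0: "\<exists>S. {} \<subseteq> S \<and> S \<subseteq> {} \<union> (Y \<inter> A0) \<and> ss_dim A0 (restr R1 A0) S = ss_dim A0 (restr R1 A0) ({} \<union> (Y \<inter> A0))
          \<and> int (card S) + ss_dim A0 (restr R1 A0) {} \<le> int (card {}) + ss_dim A0 (restr R1 A0) ({} \<union> (Y \<inter> A0))"
      using greedy[of A0 "{}" "Y \<inter> A0" "restr R1 A0"] fA0 fY0 by simp
    then obtain S0 where S0: "S0 \<subseteq> Y \<inter> A0" "d0 S0 = d0 (Y \<inter> A0)"
      "int (card S0) + d0 {} \<le> d0 (Y \<inter> A0)"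
      unfolding d0_def by auto
    have d0e: "d0 {} \<ge> 0"
    proof -
      obtain W where W: "W \<subseteq> A0" "d0 {} = delta (restr R1 A0) W"
        unfolding d0_def using ss_dim_ex[OF fA0, of "{}" "restr R1 A0"] by blast
      have "W \<subseteq> B1" using W(1) A0B1 by blast
      then show ?thesis using F0[OF W(1)] inC_nonneg[OF C1, of W] W(2) by simp
    qed
    have S0A: "S0 \<subseteq> Y \<inter> A0" using S0(1) by simp
    have S0c: "int (card S0) \<le> d0 (Y \<inter> A0)" using S0(3) d0e by simp
    have S0d: "d0 S0 = d0 (Y \<inter> A0)" using S0(2) by simp
    have S0A0: "S0 \<subseteq> A0" using S0A by blast
    have fS0: "finite S0" using S0A0 fA0 by (rule finite_subset)
    have fY1: "finite (Y \<inter> B1)" "Y \<inter> B1 \<subseteq> B1" using fB1 by simp_all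
    have S0B1: "S0 \<subseteq> B1" using S0A0 A0B1 by blast
    obtain S1 where S1: "S0 \<subseteq> S1" "S1 \<subseteq> S0 \<union> (Y \<inter> B1)" "d1 S1 = d1 (S0 \<union> (Y \<inter> B1))"
      "int (card S1) + d1 S0 \<le> int (card S0) + d1 (S0 \<union> (Y \<inter> B1))"
      unfolding d1_def using greedy[of B1 S0 "Y \<inter> B1" R1] fB1 S0B1 fY1 by (simp, elim exE conjE, blast)
    have u1: "S0 \<union> (Y \<inter> B1) = Y \<inter> B1" using S0A A0B1 by blast
    have fY2: "finite (Y \<inter> B2)" "Y \<inter> B2 \<subseteq> B2" using fB2 by simp_all
    have S0B2: "S0 \<subseteq> B2" using S0A0 A0B2 by blast
    obtain S2 where S2: "S0 \<subseteq> S2" "S2 \<subseteq> S0 \<union> (Y \<inter> B2)" "d2 S2 = d2 (S0 \<union> (Y \<inter> B2))"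
      "int (card S2) + d2 S0 \<le> int (card S0) + d2 (S0 \<union> (Y \<inter> B2))"
      unfolding d2_def using greedy[of B2 S0 "Y \<inter> B2" R2] fB2 S0B2 fY2 by (simp, elim exE conjE, blast)
    have u2: "S0 \<union> (Y \<inter> B2) = Y \<inter> B2" using S0A A0B2 by blast
    have a1: "d0 S0 \<le> d1 S0" unfolding d0_def d1_def A0_def
      by (rule ss_dim_A0[OF C1 ss1]) (use S0A0 A0_def in simp)
    have rr: "restr R1 A0 = restr R2 A0" using agree A0_def by simp
    have a2: "d0 S0 \<le> d2 S0" unfolding d0_def d2_def rr unfolding A0_def
      by (rule ss_dim_A0[OF C2 ss2]) (use S0A0 A0_def in simp)
    have S1Y: "S1 \<subseteq> Y \<inter> B1" using S1(2) u1 by simp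
    have S2Y: "S2 \<subseteq> Y \<inter> B2" using S2(2) u2 by simp
    have fS1: "finite S1" using S1Y fY1(1) by (rule finite_subset)
    have fS2: "finite S2" using S2Y fY2(1) by (rule finite_subset)
    define T where "T = S1 \<union> S2"
    have TC: "T \<subseteq> C" unfolding T_def using S1Y S2Y B1C B2C by blast
    have fT: "finite T" unfolding T_def using fS1 fS2 by blast
    have cT: "card T + card S0 \<le> card S1 + card S2"
    proof -
      have "card S1 + card S2 = card T + card (S1 \<inter> S2)" unfolding T_def by (rule card_Un_Int[OF fS1 fS2])
      moreover have "card S0 \<le> card (S1 \<inter> S2)" using S1(1) S2(1) fS1 by (intro card_mono) (simp, blast)
      ultimately show ?thesis by linarith
    qed
    have cT': "int (card T) + int (card S0) \<le> int (card S1) + int (card S2)"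
      using cT by (metis of_nat_add of_nat_le_iff)
    have bound: "int (card T) \<le> \<eta> Y"
      using cT' S1(4) S2(4) u1 u2 a1 a2 S0c S0d eta[of Y] by simp
    have span1: "Y \<inter> B1 \<subseteq> cl' T"
    proof -
      have "Y \<inter> B1 \<subseteq> ss_cl B1 R1 S1"
        using span_lemma[OF fB1 S1Y fY1(2)] S1(3) u1 unfolding d1_def by simp
      also have "\<dots> = cl' S1 \<inter> B1" by (rule H1[symmetric]) (use S1Y in blast)
      also have "\<dots> \<subseteq> cl' S1" by blast
      also have "\<dots> \<subseteq> cl' T" by (rule pg_mono[OF pg _ TC]) (simp add: T_def)
      finally show ?thesis .
    qed
    have span2: "Y \<inter> B2 \<subseteq> cl' T"
    proof -
      have "Y \<inter> B2 \<subseteq> ss_cl B2 R2 S2"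
        using span_lemma[OF fB2 S2Y fY2(2)] S2(3) u2 unfolding d2_def by simp
      also have "\<dots> = cl' S2 \<inter> B2" by (rule H2[symmetric]) (use S2Y in blast)
      also have "\<dots> \<subseteq> cl' S2" by blast
      also have "\<dots> \<subseteq> cl' T" by (rule pg_mono[OF pg _ TC]) (simp add: T_def)
      finally show ?thesis .
    qed
    have XT: "X \<subseteq> cl' T" using Y(1) YC' span1 span2 by blast
    have fX: "finite X" using X fC by (rule finite_subset)
    have "pg_dim cl' X \<le> card T" by (rule pg_dim_le[OF pg fX X fT TC XT])
    then show "int (pg_dim cl' X) \<le> \<zeta> X" using bound Y(3) by simp
  qed
  show ?thesis using part1 part2 by blast
qed

end
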